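(* Let $\mathfrak g$ be of type $A_n$ with $n\ge2$ and $r=\frac{n+1}{\gcd(n+1,2)}$. For every $k$ with $1\le k\le n$ and $k\ne1,r$, one has $d_k\lambda_1+\lambda_k\in\Psi_{\min}$, where $d_k=2r-k$ if $r<k<n+1$ and $d_k=r-k$ otherwise.
   Context: Type $A_n$ has Dynkin diagram $1-2-\cdots-n$, with fundamental weights $\lambda_1,\dots,\lambda_n$, root lattice $Q$ and dominant integral weights $\Lambda^+=\bigoplus_i\mathbb N\lambda_i$. $\Psi=\{\lambda\in\Lambda^+:2\lambda\in Q\}$ and $\Psi_{\min}=\{\lambda\in\Psi\setminus\{0\}:\lambda\ne\mu_1+\mu_2\text{ for all }\mu_1,\mu_2\in\Psi\setminus\{0\}\}$. *)

theory Defs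
  imports Main
begin

text \<open>Type A_n. A weight is represented by its coordinates with respect to the
fundamental weights lambda_1..lambda_n, as a function nat => int which is
required to vanish outside {1..n}.\<close>

type_synonym weight = "nat \<Rightarrow> int"

definition is_weight :: "nat \<Rightarrow> weight \<Rightarrow> bool" where
  "is_weight n \<mu> \<longleftrightarrow> (\<forall>i. i \<notin> {1..n} \<longrightarrow> \<mu> i = 0)"

definition fund_weight :: "nat \<Rightarrow> weight" where
  "fund_weight k = (\<lambda>i. if i = k then 1 else 0)"

text \<open>Simple root alpha_j of A_n in fundamental-weight coordinates
(row j of the Cartan matrix): alpha_j = 2 lambda_j - lambda_(j-1) - lambda_(j+1).\<close>
definition simple_root :: "nat \<Rightarrow> nat \<Rightarrow> weight" where
  "simple_root n j = (\<lambda>i. if i \<notin> {1..n} then 0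
                          else if i = j then 2
                          else if i + 1 = j \<or> j + 1 = i then -1 else 0)"

definition root_lattice :: "nat \<Rightarrow> weight set" where
  "root_lattice n = {\<mu>. \<exists>a :: nat \<Rightarrow> int.
       \<mu> = (\<lambda>i. \<Sum>j\<in>{1..n}. a j * simple_root n j i)}"

definition dominant :: "nat \<Rightarrow> weight set" where
  "dominant n = {\<mu>. is_weight n \<mu> \<and> (\<forall>i. 0 \<le> \<mu> i)}"

definition Psi :: "nat \<Rightarrow> weight set" where
  "Psi n = {\<mu> \<in> dominant n. (\<lambda>i. 2 * \<mu> i) \<in> root_lattice n}"

definition Psi_min :: "nat \<Rightarrow> weight set" where
  "Psi_min n = {\<mu> \<in> Psi n - {(\<lambda>_. 0)}.
      \<forall>\<mu>1 \<mu>2. \<mu>1 \<in> Psi n - {(\<lambda>_. 0)} \<longrightarrow> \<mu>2 \<in> Psi n - {(\<lambda>_. 0)} \<longrightarrow>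
               \<mu> \<noteq> (\<lambda>i. \<mu>1 i + \<mu>2 i)}"

end

theory Submission
  imports Defs
begin

definition LL :: "nat \<Rightarrow> nat \<Rightarrow> weight" where
  "LL n j = (\<lambda>i. if i \<in> {1..n} \<and> i = j then 1 else 0)"

definition comb :: "nat \<Rightarrow> (nat \<Rightarrow> int) \<Rightarrow> weight" where
  "comb n a = (\<lambda>i. \<Sum>j\<in>{1..n}. a j * simple_root n j i)"

definition ff :: "nat \<Rightarrow> weight \<Rightarrow> int" where
  "ff n v = (\<Sum>i\<in>{1..n}. int i * v i)"

lemma Q_iff: "v \<in> root_lattice n \<longleftrightarrow> (\<exists>a. v = comb n a)"
  unfolding root_lattice_def comb_def by auto

lemma Q_zero: "(\<lambda>_. 0) \<in> root_lattice n"
  unfolding Q_iff comb_def by (rule exI[of _ "\<lambda>_. 0"]) simp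

lemma Q_add: "x \<in> root_lattice n \<Longrightarrow> y \<in> root_lattice n \<Longrightarrow> (\<lambda>i. x i + y i) \<in> root_lattice n"
  unfolding Q_iff comb_def
  apply clarify
  subgoal for a b
    by (rule exI[of _ "\<lambda>j. a j + b j"]) (simp add: sum.distrib distrib_right)
  done

lemma Q_smult: "x \<in> root_lattice n \<Longrightarrow> (\<lambda>i. c * x i) \<in> root_lattice n"
  unfolding Q_iff comb_def
  apply clarify
  subgoal for a
    by (rule exI[of _ "\<lambda>j. c * a j"]) (simp add: sum_distrib_left mult.assoc)
  done

lemma Q_root: "j \<in> {1..n} \<Longrightarrow> simple_root n j \<in> root_lattice n"
  unfolding Q_iff comb_def
  apply (rule exI[of _ "\<lambda>j'. if j' = j then 1 else 0"])
  apply (rule ext)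
  apply (simp add: if_distrib[where f="\<lambda>c. c * x" for x] cong: if_cong)
  done

lemma alpha_L: "1 \<le> j \<Longrightarrow> j \<le> n \<Longrightarrow>
   simple_root n j = (\<lambda>i. 2 * LL n j i - LL n (j - 1) i - LL n (j + 1) i)"
  unfolding simple_root_def LL_def by (rule ext) auto

lemma P_lemma: "j \<le> n + 1 \<Longrightarrow> (\<lambda>i. int j * LL n 1 i - LL n j i) \<in> root_lattice n"
proof (induction j rule: less_induct)
  case (less j)
  show ?case
  proof (cases j)
    case 0
    then have "(\<lambda>i. int j * LL n 1 i - LL n j i) = (\<lambda>_. 0)" by (auto simp: LL_def)
    then show ?thesis using Q_zero[of n] by simp
  next
    case (Suc m)
    show ?thesis
    proof (cases m)
      case 0
      then show ?thesis using Q_zero[of n] Suc by simp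
    next
      case (Suc p)
      have h1: "(\<lambda>i. int (p+1) * LL n 1 i - LL n (p+1) i) \<in> root_lattice n"
        using less.IH[of "p+1"] less.prems Suc \<open>j = Suc m\<close> by simp
      have h0: "(\<lambda>i. int p * LL n 1 i - LL n p i) \<in> root_lattice n"
        using less Suc \<open>j = Suc m\<close> by auto
      have ha: "simple_root n (p+1) \<in> root_lattice n"
        using less Suc \<open>j = Suc m\<close> by (intro Q_root) auto
      have e: "simple_root n (p+1) = (\<lambda>i. 2 * LL n (p+1) i - LL n p i - LL n (p + 2) i)"
        using alpha_L[of "p+1" n] less Suc \<open>j = Suc m\<close> by auto
      have "(\<lambda>i. (\<lambda>i. (\<lambda>i. 2 * (int (p+1) * LL n 1 i - LL n (p+1) i)) i
                 + (\<lambda>i. (-1) * (int p * LL n 1 i - LL n p i)) i) i + simple_root n (p+1) i)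
            \<in> root_lattice n"
        by (intro Q_add Q_smult h1 h0 ha)
      moreover have "(\<lambda>i. (\<lambda>i. (\<lambda>i. 2 * (int (p+1) * LL n 1 i - LL n (p+1) i)) i
                 + (\<lambda>i. (-1) * (int p * LL n 1 i - LL n p i)) i) i + simple_root n (p+1) i)
           = (\<lambda>i. int j * LL n 1 i - LL n j i)"
        unfolding e using Suc \<open>j = Suc m\<close> by (auto simp: algebra_simps)
      ultimately show ?thesis by simp
    qed
  qed
qed

lemma ff_L: "ff n (LL n m) = (if 1 \<le> m \<and> m \<le> n then int m else 0)"
  unfolding ff_def LL_def by (simp add: if_distrib cong: if_cong)

lemma ff_lin: "ff n (\<lambda>i. a * x i + b * y i + c * z i) = a * ff n x + b * ff n y + c * ff n z"
  unfolding ff_def by (simp add: sum.distrib sum_distrib_left algebra_simps)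

lemma ff_root: "j \<in> {1..n} \<Longrightarrow> int (n+1) dvd ff n (simple_root n j)"
proof -
  assume j: "j \<in> {1..n}"
  have "simple_root n j = (\<lambda>i. 2 * LL n j i + (-1) * LL n (j - 1) i + (-1) * LL n (j + 1) i)"
    using alpha_L[of j n] j by auto
  then have "ff n (simple_root n j) = 2 * ff n (LL n j) + (-1) * ff n (LL n (j-1)) + (-1) * ff n (LL n (j+1))"
    by (simp only: ff_lin)
  also have "\<dots> = (if j = n then int (n+1) else 0)"
    using j by (auto simp: ff_L)
  finally show ?thesis by simp
qed

lemma ff_dvd: "v \<in> root_lattice n \<Longrightarrow> int (n+1) dvd ff n v"
proof -
  assume "v \<in> root_lattice n"
  then obtain a where a: "v = comb n a" by (auto simp: Q_iff)
  have "ff n v = (\<Sum>i\<in>{1..n}. \<Sum>j\<in>{1..n}. int i * (a j * simple_root n j i))"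
    unfolding a ff_def comb_def by (simp add: sum_distrib_left)
  also have "\<dots> = (\<Sum>j\<in>{1..n}. \<Sum>i\<in>{1..n}. int i * (a j * simple_root n j i))"
    by (rule sum.swap)
  also have "\<dots> = (\<Sum>j\<in>{1..n}. a j * ff n (simple_root n j))"
    unfolding ff_def by (simp add: sum_distrib_left algebra_simps)
  finally show ?thesis
    using ff_root[of _ n] by (auto intro!: dvd_sum dvd_mult)
qed

lemma ff_L1: "1 \<le> n \<Longrightarrow> ff n (\<lambda>i. x * LL n 1 i) = x"
  using ff_lin[of n x "LL n 1" 0 "LL n 1" 0 "LL n 1"] ff_L[of n 1] by simp

lemma r_facts:
  fixes n :: nat
  defines "R \<equiv> int ((n + 1) div gcd (n + 1) 2)"
  shows "int (n+1) dvd 2 * R" "\<And>c::int. 0 < c \<Longrightarrow> int (n+1) dvd 2 * c \<Longrightarrow> R \<le> c"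
        "int (n+1) \<le> 2 * R"
proof -
  have "int (n+1) dvd 2 * R \<and> (\<forall>c::int. 0 < c \<longrightarrow> int (n+1) dvd 2 * c \<longrightarrow> R \<le> c) \<and> int (n+1) \<le> 2 * R"
  proof (cases "even (n+1)")
    case True
    then obtain q where q: "n + 1 = 2 * q" by blast
    have g: "gcd (n+1) 2 = 2" using True by (simp add: gcd_nat.absorb2)
    have R: "R = int q" unfolding R_def g q by simp
    have q': "1 + int n = 2 * int q" using q by linarith
    show ?thesis
    proof (intro conjI allI impI)
      fix c :: int assume "0 < c" "int (n+1) dvd 2 * c"
      then have "int q dvd c" unfolding q by simp
      then show "R \<le> c" using \<open>0 < c\<close> R by (simp add: zdvd_imp_le)
    qed (use q' in \<open>auto simp: R\<close>)

  next
    case False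
    have g: "gcd (n+1) 2 = 1"
      using False by (metis coprime_imp_gcd_eq_1 coprime_commute coprime_right_2_iff_odd)
    have R: "R = int (n+1)" unfolding R_def g by simp
    show ?thesis
    proof (intro conjI allI impI)
      fix c :: int assume "0 < c" "int (n+1) dvd 2 * c"
      moreover have "coprime (int (n+1)) 2" using False by simp
      ultimately have "int (n+1) dvd c" using coprime_dvd_mult_right_iff by blast
      then show "R \<le> c" using \<open>0 < c\<close> R by (simp add: zdvd_imp_le)
    next
      show "int (n+1) dvd 2 * R" unfolding R by (rule dvd_triv_right)
    qed (auto simp: R)
  qed
  then show "int (n+1) dvd 2 * R" "\<And>c::int. 0 < c \<Longrightarrow> int (n+1) dvd 2 * c \<Longrightarrow> R \<le> c"
        "int (n+1) \<le> 2 * R" by auto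
qed


lemma side:
  assumes "\<nu> \<in> Psi n" "\<nu> \<noteq> (\<lambda>_. 0)" "\<And>i. i \<noteq> 1 \<Longrightarrow> \<nu> i = 0" "1 \<le> n"
  shows "int ((n + 1) div gcd (n + 1) 2) \<le> \<nu> 1"
proof -
  have e: "\<nu> = (\<lambda>i. \<nu> 1 * LL n 1 i)"
    using assms(3,4) by (intro ext) (auto simp: LL_def)
  have "(\<lambda>i. 2 * \<nu> i) \<in> root_lattice n" using assms(1) by (simp add: Psi_def)
  also have "(\<lambda>i. 2 * \<nu> i) = (\<lambda>i. (2 * \<nu> 1) * LL n 1 i)"
    by (subst e) (simp add: mult.assoc)
  finally have "int (n+1) dvd 2 * \<nu> 1" using ff_dvd ff_L1[OF assms(4)] by metis
  moreover have "0 \<le> \<nu> 1" using assms(1) by (simp add: Psi_def dominant_def)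
  moreover have "\<nu> 1 \<noteq> 0" using e assms(2) by auto
  ultimately show ?thesis using r_facts(2)[where n=n and c="\<nu> 1"] by simp
qed

theorem lemma4p5:
  fixes n k :: nat
  assumes "n \<ge> 2"
    and "1 \<le> k" "k \<le> n" "k \<noteq> 1" "k \<noteq> (n + 1) div gcd (n + 1) 2"
  shows "(let r = int ((n + 1) div gcd (n + 1) 2);
              d = (if r < int k \<and> int k < int n + 1 then 2 * r - int k else r - int k)
          in (\<lambda>i. d * fund_weight 1 i + fund_weight k i)) \<in> Psi_min n"
proof -
  define R where "R = int ((n + 1) div gcd (n + 1) 2)"
  define d where "d = (if R < int k \<and> int k < int n + 1 then 2 * R - int k else R - int k)"
  define \<mu> where "\<mu> = (\<lambda>i. d * fund_weight 1 i + fund_weight k i)"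
  have RA: "int (n+1) dvd 2 * R" and RC: "int (n+1) \<le> 2 * R"
    using r_facts[where n=n] unfolding R_def by auto
  have kR: "int k \<noteq> R" using assms(5) unfolding R_def by simp
  have d0: "0 \<le> d" and dR: "d < R" and dk: "int (n+1) dvd 2 * (d + int k)"
  proof -
    show "0 \<le> d" "d < R" using kR RC assms unfolding d_def by auto
    have "d + int k = R \<or> d + int k = 2 * R" using assms kR unfolding d_def by auto
    then show "int (n+1) dvd 2 * (d + int k)" using RA
      by (metis dvd_mult)
  qed
  have f1: "fund_weight 1 = LL n 1" and fk: "fund_weight k = LL n k"
    using assms by (auto simp: fund_weight_def LL_def)
  have \<mu>e: "\<mu> = (\<lambda>i. d * LL n 1 i + LL n k i)" unfolding \<mu>_def f1 fk ..
  have \<mu>k: "\<mu> k = 1" using assms unfolding \<mu>e by (auto simp: LL_def)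
  have \<mu>1: "\<mu> 1 = d" using assms unfolding \<mu>e by (auto simp: LL_def)
  have \<mu>o: "\<And>i. i \<noteq> 1 \<Longrightarrow> i \<noteq> k \<Longrightarrow> \<mu> i = 0" unfolding \<mu>e by (auto simp: LL_def)
  have dom: "\<mu> \<in> dominant n"
    unfolding dominant_def is_weight_def \<mu>e using d0 by (auto simp: LL_def)
  obtain m where m: "2 * (d + int k) = int (n+1) * m" using dk by blast
  have Pn: "(\<lambda>i. int (n+1) * LL n 1 i) \<in> root_lattice n"
  proof -
    have "LL n (n+1) = (\<lambda>_. 0)" by (auto simp: LL_def)
    then show ?thesis using P_lemma[of "n+1" n] by simp
  qed
  have Pk: "(\<lambda>i. int k * LL n 1 i - LL n k i) \<in> root_lattice n"
    using P_lemma[of k n] assms by simp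
  have "(\<lambda>i. (\<lambda>i. m * (int (n+1) * LL n 1 i)) i + (\<lambda>i. (-2) * (int k * LL n 1 i - LL n k i)) i)
        \<in> root_lattice n"
    by (intro Q_add Q_smult Pn Pk)
  moreover have "(\<lambda>i. (\<lambda>i. m * (int (n+1) * LL n 1 i)) i + (\<lambda>i. (-2) * (int k * LL n 1 i - LL n k i)) i)
     = (\<lambda>i. 2 * \<mu> i)"
  proof
    fix i
    have "m * (int (n+1) * LL n 1 i) = 2 * (d + int k) * LL n 1 i" using m by (simp add: algebra_simps)
    then show "m * (int (n+1) * LL n 1 i) + (-2) * (int k * LL n 1 i - LL n k i) = 2 * \<mu> i"
      unfolding \<mu>e by (simp add: algebra_simps)
  qed
  ultimately have inPsi: "\<mu> \<in> Psi n" using dom by (simp add: Psi_def)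
  have nz: "\<mu> \<noteq> (\<lambda>_. 0)" using \<mu>k by auto
  have "\<mu> \<in> Psi_min n"
    unfolding Psi_min_def
  proof (intro CollectI conjI allI impI)
    show "\<mu> \<in> Psi n - {\<lambda>_. 0}" using inPsi nz by simp
    fix \<mu>1 \<mu>2
    assume a1: "\<mu>1 \<in> Psi n - {\<lambda>_. 0}" and a2: "\<mu>2 \<in> Psi n - {\<lambda>_. 0}"
    show "\<mu> \<noteq> (\<lambda>i. \<mu>1 i + \<mu>2 i)"
    proof
      assume eq: "\<mu> = (\<lambda>i. \<mu>1 i + \<mu>2 i)"
      have n1: "\<And>i. 0 \<le> \<mu>1 i" using a1 by (simp add: Psi_def dominant_def)
      have n2: "\<And>i. 0 \<le> \<mu>2 i" using a2 by (simp add: Psi_def dominant_def)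
      have s: "\<And>i. \<mu> i = \<mu>1 i + \<mu>2 i" using eq by metis
      have o1: "\<And>i. i \<noteq> 1 \<Longrightarrow> i \<noteq> k \<Longrightarrow> \<mu>1 i = 0"
        using s \<mu>o n1 n2 by (metis add_nonneg_eq_0_iff)
      have o2: "\<And>i. i \<noteq> 1 \<Longrightarrow> i \<noteq> k \<Longrightarrow> \<mu>2 i = 0"
        using s \<mu>o n1 n2 by (metis add_nonneg_eq_0_iff)
      have "\<mu>1 k = 0 \<or> \<mu>2 k = 0" using s[of k] \<mu>k n1[of k] n2[of k] by linarith
      then show False
      proof
        assume "\<mu>1 k = 0"
        then have "R \<le> \<mu>1 1" unfolding R_def
          using a1 o1 assms(1) by (intro side) auto
        then show False using s[of 1] \<mu>1 n2[of 1] dR by linarith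
      next
        assume "\<mu>2 k = 0"
        then have "R \<le> \<mu>2 1" unfolding R_def
          using a2 o2 assms(1) by (intro side) auto
        then show False using s[of 1] \<mu>1 n1[of 1] dR by linarith
      qed
    qed
  qed
  then show ?thesis unfolding Let_def \<mu>_def d_def R_def .
qed

end
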